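(* Let $d\in\mathbb{N}$ and let $\mathcal{P}$ be a partition of $\mathbb{R}^{d}$ with the adjacent-or-far property. Suppose there exists $D\in(0,\infty)$ such that $\operatorname{diam}(X)<D$ for all $X\in\mathcal{P}$. Then $\mathcal{P}$ contains a $(d+1)$-clique.
   Context: On $\mathbb{R}^d$ use $d_{max}(\vec{x},\vec{y})=\max_i|x_i-y_i|$ and $\operatorname{diam}(X)=\sup\{d_{max}(\vec{x},\vec{y}):\vec{x},\vec{y}\in X\}$. Members $X,Y$ of $\mathcal{P}$ are adjacent if $\overline{X}\cap\overline{Y}\neq\emptyset$ (closures); an $n$-clique is a set of $n$ distinct pairwise adjacent members. $\mathcal{P}$ has the adjacent-or-far property if there exists $\epsilon\in(0,\infty)$ such that for all $X,Y\in\mathcal{P}$, either $X$ and $Y$ are adjacent or $d_{max}(\vec{x},\vec{y})>\epsilon$ for all $\vec{x}\in X$, $\vec{y}\in Y$. *)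

theory Defs
  imports "HOL-Analysis.Analysis" "HOL-Library.Disjoint_Sets" "HOL-Library.Extended_Real"
begin

text \<open>Maximum (sup) metric on R^d, with R^d modelled as real ^ 'n, d = CARD('n).\<close>
definition dmax :: "real ^ 'n \<Rightarrow> real ^ 'n \<Rightarrow> real" where
  "dmax x y = Max (range (\<lambda>i. \<bar>x $ i - y $ i\<bar>))"

text \<open>Diameter w.r.t. dmax, as an extended real (so unbounded sets have diameter infinity).\<close>
definition diam_max :: "(real ^ 'n) set \<Rightarrow> ereal" where
  "diam_max X = (SUP p \<in> X \<times> X. ereal (dmax (fst p) (snd p)))"

definition adjacent :: "(real ^ 'n) set \<Rightarrow> (real ^ 'n) set \<Rightarrow> bool" where
  "adjacent X Y \<longleftrightarrow> closure X \<inter> closure Y \<noteq> {}"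

definition is_clique :: "((real ^ 'n) set) set \<Rightarrow> (real ^ 'n) set set \<Rightarrow> nat \<Rightarrow> bool" where
  "is_clique P C n \<longleftrightarrow> C \<subseteq> P \<and> finite C \<and> card C = n \<and>
     (\<forall>X\<in>C. \<forall>Y\<in>C. adjacent X Y)"

definition adjacent_or_far :: "((real ^ 'n) set) set \<Rightarrow> bool" where
  "adjacent_or_far P \<longleftrightarrow> (\<exists>\<epsilon>>0. \<forall>X\<in>P. \<forall>Y\<in>P.
     adjacent X Y \<or> (\<forall>x\<in>X. \<forall>y\<in>Y. dmax x y > \<epsilon>))"

end

theory Submission
  imports Defs
begin

lemma kuhn_strong:
  fixes n p :: nat and label :: "(nat \<Rightarrow> nat) \<Rightarrow> nat \<Rightarrow> nat"
  assumes "0 < p"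
    and "\<forall>x j. j < n \<and> x j = 0 \<longrightarrow> label x j = 0"
    and "\<forall>x j. j < n \<and> x j = p \<longrightarrow> label x j = 1"
  obtains b :: "nat \<Rightarrow> nat" and s :: "(nat \<Rightarrow> nat) set" where "\<forall>x\<in>s. \<forall>j<n. b j \<le> x j \<and> x j \<le> b j + 1"
    and "(reduced n \<circ> label) ` s = {..n}"
proof -
  let ?rl = "reduced n \<circ> label"
  let ?A = "{s. ksimplex p n s \<and> ?rl ` s = {..n}}"
  have "odd (card ?A)"
    using assms by (intro kuhn_combinatorial[of p n label]) auto
  then have "?A \<noteq> {}"
    by (rule odd_card_imp_not_empty)
  then obtain s b u where "kuhn_simplex p n b u s" and rl: "?rl ` s = {..n}"
    by (auto elim: ksimplex.cases)
  interpret kuhn_simplex p n b u s by fact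
  show ?thesis
  proof (rule that)
    show "\<forall>x\<in>s. \<forall>j<n. b j \<le> x j \<and> x j \<le> b j + 1"
      using base_le le_Suc_base by auto
  qed (rule rl)
qed

lemma dmax_le:
  fixes x y :: "real ^ 'n"
  assumes "\<And>i. \<bar>x $ i - y $ i\<bar> \<le> e"
  shows "dmax x y \<le> e"
  unfolding dmax_def using assms by (subst Max_le_iff) auto

lemma dmax_ge:
  fixes x y :: "real ^ 'n"
  shows "\<bar>x $ i - y $ i\<bar> \<le> dmax x y"
  unfolding dmax_def by (rule Max_ge) auto

theorem mainTheorem14:
  fixes P :: "(real ^ 'n) set set"
  assumes "partition_on UNIV P"
    and "adjacent_or_far P"
    and "\<exists>D>0. \<forall>X\<in>P. diam_max X < ereal D"
  shows "\<exists>C. is_clique P C (CARD('n) + 1)"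
proof -
  define n where "n = CARD('n)"
  obtain \<epsilon> where ep: "\<epsilon> > 0" and far: "\<forall>X\<in>P. \<forall>Y\<in>P.
     adjacent X Y \<or> (\<forall>x\<in>X. \<forall>y\<in>Y. dmax x y > \<epsilon>)"
    using assms(2) unfolding adjacent_or_far_def by blast
  obtain D where D: "D > 0" "\<forall>X\<in>P. diam_max X < ereal D" using assms(3) by blast
  have dm: "dmax x y < D" if "X \<in> P" "x \<in> X" "y \<in> X" for X x y
  proof -
    have "ereal (dmax x y) \<le> diam_max X"
      unfolding diam_max_def using that by (intro SUP_upper2[of "(x,y)"]) auto
    also have "\<dots> < ereal D" using D that by auto
    finally show ?thesis by simp
  qed
  have cover: "\<Union>P = UNIV" and disj: "disjoint P" and ne: "{} \<notin> P"
    using assms(1) unfolding partition_on_def by auto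
  define piece where "piece y = (SOME X. X \<in> P \<and> y \<in> X)" for y :: "real ^ 'n"
  have piece: "piece y \<in> P \<and> y \<in> piece y" for y
  proof -
    have "\<exists>X. X \<in> P \<and> y \<in> X" using cover by blast
    then show ?thesis unfolding piece_def by (rule someI_ex)
  qed
  obtain h where h: "bij_betw h (UNIV :: 'n set) {0..<n}"
    using ex_bij_betw_finite_nat[of "UNIV :: 'n set"] unfolding n_def by auto
  define hi where "hi = inv_into UNIV h"
  have hhi: "h (hi j) = j" if "j < n" for j
    using h that unfolding hi_def by (simp add: bij_betw_inv_into_right)
  have hlt: "h i < n" for i using h by (auto simp: bij_betw_def)
  define pt where "pt x = (\<chi> i. \<epsilon> * real (x (h i)))" for x :: "nat \<Rightarrow> nat"
  define F where "F X = reduced n (\<lambda>j. if \<exists>y\<in>X. y $ hi j \<le> 0 then 0 else (1::nat))"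
    for X :: "(real ^ 'n) set"
  define label where "label x = (\<lambda>j. if \<exists>y\<in>piece (pt x). y $ hi j \<le> 0 then 0 else (1::nat))"
    for x :: "nat \<Rightarrow> nat"
  define p where "p = nat \<lceil>D / \<epsilon>\<rceil> + 1"
  have p0: "0 < p" unfolding p_def by simp
  have pD: "D \<le> \<epsilon> * real p"
  proof -
    have "D / \<epsilon> \<le> real p" unfolding p_def by linarith
    then show ?thesis using ep by (simp add: field_simps)
  qed
  have l0: "\<forall>x j. j < n \<and> x j = 0 \<longrightarrow> label x j = 0"
  proof (intro allI impI)
    fix x :: "nat \<Rightarrow> nat" and j assume a: "j < n \<and> x j = 0"
    have "pt x $ hi j \<le> 0" using a hhi unfolding pt_def by simp
    then show "label x j = 0" unfolding label_def using piece[of "pt x"] by auto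
  qed
  have l1: "\<forall>x j. j < n \<and> x j = p \<longrightarrow> label x j = 1"
  proof (intro allI impI)
    fix x :: "nat \<Rightarrow> nat" and j assume a: "j < n \<and> x j = p"
    have v: "pt x $ hi j = \<epsilon> * real p" using a hhi unfolding pt_def by simp
    have "\<not> (y $ hi j \<le> 0)" if "y \<in> piece (pt x)" for y
    proof
      assume "y $ hi j \<le> 0"
      then have "D \<le> \<bar>pt x $ hi j - y $ hi j\<bar>" using v pD by simp
      also have "\<dots> \<le> dmax (pt x) y" by (rule dmax_ge)
      also have "\<dots> < D" using dm[of "piece (pt x)" "pt x" y] piece[of "pt x"] that by simp
      finally show False by simp
    qed
    then show "label x j = 1" unfolding label_def by auto
  qed
  obtain b s where bs: "\<forall>x\<in>s. \<forall>j<n. b j \<le> x j \<and> x j \<le> b j + 1"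
    and rl: "(reduced n \<circ> label) ` s = {..n}"
    by (rule kuhn_strong[OF p0 l0 l1])
  have rlF: "(reduced n \<circ> label) x = F (piece (pt x))" for x
    unfolding F_def label_def comp_def by (rule refl)
  have ex: "\<forall>k. \<exists>x. k \<le> n \<longrightarrow> x \<in> s \<and> F (piece (pt x)) = k"
  proof
    fix k
    show "\<exists>x. k \<le> n \<longrightarrow> x \<in> s \<and> F (piece (pt x)) = k"
    proof (cases "k \<le> n")
      case True
      then have "k \<in> (reduced n \<circ> label) ` s" using rl by simp
      then obtain x where "x \<in> s" "k = (reduced n \<circ> label) x" by blast
      then show ?thesis using rlF by auto
    qed simp
  qed
  obtain xk where xk: "\<And>k. k \<le> n \<Longrightarrow> xk k \<in> s \<and> F (piece (pt (xk k))) = k"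
    using choice[OF ex] by blast
  define C where "C = (\<lambda>k. piece (pt (xk k))) ` {..n}"
  have inj: "inj_on (\<lambda>k. piece (pt (xk k))) {..n}"
  proof (rule inj_onI)
    fix a c assume a: "a \<in> {..n}" and c: "c \<in> {..n}" and eq: "piece (pt (xk a)) = piece (pt (xk c))"
    have "a = F (piece (pt (xk a)))" using xk[of a] a by (simp only: atMost_iff)
    also have "\<dots> = F (piece (pt (xk c)))" using eq by (rule arg_cong)
    also have "\<dots> = c" using xk[of c] c by (simp only: atMost_iff)
    finally show "a = c" .
  qed
  have cardC: "card C = n + 1" unfolding C_def card_image[OF inj] card_atMost by simp
  have sub: "C \<subseteq> P" unfolding C_def using piece by (simp add: image_subset_iff)
  have adj: "adjacent X Y" if XC: "X \<in> C" and YC: "Y \<in> C" for X Y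
  proof -
    obtain k where k0: "k \<in> {..n}" and k1: "X = piece (pt (xk k))"
      using XC unfolding C_def by (rule imageE)
    have k: "k \<le> n" "X = piece (pt (xk k))" using k0 k1 by simp_all
    obtain l where l0: "l \<in> {..n}" and l1: "Y = piece (pt (xk l))"
      using YC unfolding C_def by (rule imageE)
    have l: "l \<le> n" "Y = piece (pt (xk l))" using l0 l1 by simp_all
    have d: "dmax (pt (xk k)) (pt (xk l)) \<le> \<epsilon>"
    proof (rule dmax_le)
      fix i
      have "b (h i) \<le> xk k (h i) \<and> xk k (h i) \<le> b (h i) + 1"
           "b (h i) \<le> xk l (h i) \<and> xk l (h i) \<le> b (h i) + 1"
        using bs conjunct1[OF xk[OF k(1)]] conjunct1[OF xk[OF l(1)]] hlt[of i] by blast+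
      then have "\<bar>real (xk k (h i)) - real (xk l (h i))\<bar> \<le> 1" by linarith
      then have "\<epsilon> * \<bar>real (xk k (h i)) - real (xk l (h i))\<bar> \<le> \<epsilon>"
        using ep by (simp add: mult_le_cancel_left1)
      then show "\<bar>pt (xk k) $ i - pt (xk l) $ i\<bar> \<le> \<epsilon>"
        unfolding pt_def using ep by (simp add: abs_mult flip: right_diff_distrib)
    qed
    have XP: "X \<in> P" "pt (xk k) \<in> X" unfolding k(2) using piece[of "pt (xk k)"] by simp_all
    have YP: "Y \<in> P" "pt (xk l) \<in> Y" unfolding l(2) using piece[of "pt (xk l)"] by simp_all
    from far XP(1) YP(1) have "adjacent X Y \<or> (\<forall>x\<in>X. \<forall>y\<in>Y. dmax x y > \<epsilon>)" by blast
    then show ?thesis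
    proof
      assume "\<forall>x\<in>X. \<forall>y\<in>Y. dmax x y > \<epsilon>"
      then have "dmax (pt (xk k)) (pt (xk l)) > \<epsilon>" using XP YP by blast
      with d show ?thesis by simp
    qed
  qed
  have "is_clique P C (CARD('n) + 1)"
  proof -
    have "finite C" unfolding C_def by simp
    then show ?thesis unfolding is_clique_def using sub cardC adj n_def by blast
  qed
  then show ?thesis by blast
qed

end
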